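(* If a join-congruence uniform lattice is shellable, then it is join-extremal. If a meet-congruence uniform lattice is shellable, then it is meet-extremal.
   Context: All lattices are finite. For a convex subset $C$ of a lattice $L$, let $I_L(C)=\{y\in L\mid\exists x\in C,\ y\le x\}$, and the doubling $L[C]$ is the subposet of $L\times\{0<1\}$ on $\big(I_L(C)\times\{0\}\big)\sqcup\big(((L\setminus I_L(C))\cup C)\times\{1\}\big)$. A lattice is join-congruence uniform (resp. meet-congruence uniform) if it is obtained from the one-element lattice by successive doublings of nonempty lower (resp. upper) pseudo-intervals, where a lower (resp. upper) pseudo-interval is a convex union of intervals sharing the same minimum (resp. maximum). Join-extremal (resp. meet-extremal) means the length (maximum number of elements of a chain minus one) equals the number of join-irreducible (resp. meet-irreducible) elements. The order complex of $L$ has the chains of $L$ as faces; $L$ is shellable if its facets (maximal chains) admit a linear order $F_1,\dots,F_k$ such that for each $j<k$, $\big(\bigcup_{i\le j}\langle F_i\rangle\big)\cap\langle F_{j+1}\rangle$ is pure of dimension $|F_{j+1}|-2$, with $\langle F\rangle$ the set of subsets of $F$. *)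

theory Defs
  imports Main
begin

text \<open>Every lattice obtained from the one-element lattice by successive doublings is
(up to isomorphism) a subposet of some product of two-element chains.  We encode an
element (x, b) of L x {0<1} as the list b # x, so that all such lattices are sets of
bool lists ordered componentwise (False < True).\<close>

definition ble :: "bool list \<Rightarrow> bool list \<Rightarrow> bool" where
  "ble xs ys \<longleftrightarrow> list_all2 (\<le>) xs ys"

definition convex_in :: "bool list set \<Rightarrow> bool list set \<Rightarrow> bool" where
  "convex_in L C \<longleftrightarrow> C \<subseteq> L \<and>
     (\<forall>x\<in>C. \<forall>z\<in>C. \<forall>y\<in>L. ble x y \<and> ble y z \<longrightarrow> y \<in> C)"

definition interval_in :: "bool list set \<Rightarrow> bool list \<Rightarrow> bool list \<Rightarrow> bool list set" where
  "interval_in L a b = {y\<in>L. ble a y \<and> ble y b}"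

definition lower_pseudo_interval :: "bool list set \<Rightarrow> bool list set \<Rightarrow> bool" where
  "lower_pseudo_interval L C \<longleftrightarrow> convex_in L C \<and>
     (\<exists>a\<in>L. \<exists>B. B \<noteq> {} \<and> B \<subseteq> L \<and> (\<forall>b\<in>B. ble a b) \<and> C = (\<Union>b\<in>B. interval_in L a b))"

definition upper_pseudo_interval :: "bool list set \<Rightarrow> bool list set \<Rightarrow> bool" where
  "upper_pseudo_interval L C \<longleftrightarrow> convex_in L C \<and>
     (\<exists>b\<in>L. \<exists>A. A \<noteq> {} \<and> A \<subseteq> L \<and> (\<forall>a\<in>A. ble a b) \<and> C = (\<Union>a\<in>A. interval_in L a b))"

definition down_closure :: "bool list set \<Rightarrow> bool list set \<Rightarrow> bool list set" where
  "down_closure L C = {y\<in>L. \<exists>x\<in>C. ble y x}"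

definition doubling :: "bool list set \<Rightarrow> bool list set \<Rightarrow> bool list set" where
  "doubling L C = (\<lambda>x. False # x) ` down_closure L C
                 \<union> (\<lambda>x. True # x) ` ((L - down_closure L C) \<union> C)"

inductive doubling_gen :: "(bool list set \<Rightarrow> bool list set \<Rightarrow> bool) \<Rightarrow> bool list set \<Rightarrow> bool"
  for P where
  base: "doubling_gen P {[]}"
| step: "doubling_gen P L \<Longrightarrow> C \<noteq> {} \<Longrightarrow> P L C \<Longrightarrow> doubling_gen P (doubling L C)"

definition order_iso_to :: "'a::order itself \<Rightarrow> bool list set \<Rightarrow> bool" where
  "order_iso_to _ S \<longleftrightarrow> (\<exists>f::'a \<Rightarrow> bool list. bij_betw f UNIV S \<and>
       (\<forall>x y. x \<le> y \<longleftrightarrow> ble (f x) (f y)))"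

definition join_cong_uniform :: "'a::{finite,lattice} itself \<Rightarrow> bool" where
  "join_cong_uniform T \<longleftrightarrow> (\<exists>S. doubling_gen lower_pseudo_interval S \<and> order_iso_to T S)"

definition meet_cong_uniform :: "'a::{finite,lattice} itself \<Rightarrow> bool" where
  "meet_cong_uniform T \<longleftrightarrow> (\<exists>S. doubling_gen upper_pseudo_interval S \<and> order_iso_to T S)"

definition join_irreducible :: "'a::lattice \<Rightarrow> bool" where
  "join_irreducible x \<longleftrightarrow> (\<exists>y. \<not> x \<le> y) \<and> (\<forall>y z. x = sup y z \<longrightarrow> x = y \<or> x = z)"

definition meet_irreducible :: "'a::lattice \<Rightarrow> bool" where
  "meet_irreducible x \<longleftrightarrow> (\<exists>y. \<not> y \<le> x) \<and> (\<forall>y z. x = inf y z \<longrightarrow> x = y \<or> x = z)"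

definition lattice_length :: "'a::{finite,order} itself \<Rightarrow> nat" where
  "lattice_length _ = Max {card S - 1 | S :: 'a set. Complete_Partial_Order.chain (\<le>) S}"

definition join_extremal :: "'a::{finite,lattice} itself \<Rightarrow> bool" where
  "join_extremal T \<longleftrightarrow> lattice_length T = card {x::'a. join_irreducible x}"

definition meet_extremal :: "'a::{finite,lattice} itself \<Rightarrow> bool" where
  "meet_extremal T \<longleftrightarrow> lattice_length T = card {x::'a. meet_irreducible x}"

definition max_chain :: "'a::order set \<Rightarrow> bool" where
  "max_chain F \<longleftrightarrow> Complete_Partial_Order.chain (\<le>) F \<and>
     (\<forall>G. Complete_Partial_Order.chain (\<le>) G \<and> F \<subseteq> G \<longrightarrow> G = F)"

definition pure_of_dim :: "'a set set \<Rightarrow> int \<Rightarrow> bool" where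
  "pure_of_dim K d \<longleftrightarrow> (\<forall>F\<in>K. (\<forall>G\<in>K. F \<subseteq> G \<longrightarrow> G = F) \<longrightarrow> int (card F) - 1 = d)"

definition shellable :: "'a::{finite,order} itself \<Rightarrow> bool" where
  "shellable _ \<longleftrightarrow> (\<exists>Fs :: 'a set list. distinct Fs \<and> set Fs = {F. max_chain F} \<and>
     (\<forall>j. j + 1 < length Fs \<longrightarrow>
        pure_of_dim ((\<Union>i\<le>j. Pow (Fs ! i)) \<inter> Pow (Fs ! (j + 1)))
                    (int (card (Fs ! (j + 1))) - 2)))"

end

theory Submission
  imports Defs
begin

locale fin_lat =
  fixes le :: "'a \<Rightarrow> 'a \<Rightarrow> bool" and jn mt :: "'a \<Rightarrow> 'a \<Rightarrow> 'a"
  assumes refl: "le x x" and antisym: "le x y \<Longrightarrow> le y x \<Longrightarrow> x = y"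
  and trans: "le x y \<Longrightarrow> le y z \<Longrightarrow> le x z"
  and fin: "finite (UNIV :: 'a set)"
  and jn1: "le x (jn x y)" and jn2: "le y (jn x y)" and jn3: "le x z \<Longrightarrow> le y z \<Longrightarrow> le (jn x y) z"
  and mt1: "le (mt x y) x" and mt2: "le (mt x y) y" and mt3: "le z x \<Longrightarrow> le z y \<Longrightarrow> le z (mt x y)"
begin

definition chainL :: "'a set \<Rightarrow> bool" where
  "chainL S \<longleftrightarrow> (\<forall>x\<in>S. \<forall>y\<in>S. le x y \<or> le y x)"
definition maxch :: "'a set \<Rightarrow> bool" where
  "maxch F \<longleftrightarrow> chainL F \<and> (\<forall>G. chainL G \<and> F \<subseteq> G \<longrightarrow> G = F)"
definition cover :: "'a \<Rightarrow> 'a \<Rightarrow> bool" where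
  "cover x y \<longleftrightarrow> le x y \<and> x \<noteq> y \<and> (\<forall>z. le x z \<and> le z y \<longrightarrow> z = x \<or> z = y)"
definition jirr :: "'a \<Rightarrow> bool" where
  "jirr x \<longleftrightarrow> (\<exists>y. \<not> le x y) \<and> (\<forall>y z. x = jn y z \<longrightarrow> x = y \<or> x = z)"
definition islab :: "'a \<Rightarrow> 'a \<Rightarrow> 'a \<Rightarrow> bool" where
  "islab x y l \<longleftrightarrow> le l y \<and> \<not> le l x \<and> (\<forall>z. le z y \<and> \<not> le z x \<longrightarrow> le l z)"
definition Lab :: "'a set \<Rightarrow> 'a set" where
  "Lab F = {l. \<exists>x\<in>F. \<exists>y\<in>F. cover x y \<and> islab x y l}"
definition LPa :: bool where
  "LPa \<longleftrightarrow> (\<forall>x y. cover x y \<longrightarrow> (\<exists>l. islab x y l))"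

lemma top_ex: "\<exists>t. \<forall>x. le x t"
proof -
  have "finite A \<Longrightarrow> A \<noteq> {} \<Longrightarrow> \<exists>t. \<forall>x\<in>A. le x t" for A
  proof (induct rule: finite_ne_induct)
    case (singleton x) then show ?case using refl by blast
  next
    case (insert x F)
    then obtain t where "\<forall>x\<in>F. le x t" by blast
    then show ?case using jn1 jn2 trans by blast
  qed
  from this[of UNIV] fin show ?thesis by auto
qed

lemma bot_ex: "\<exists>b. \<forall>x. le b x"
proof -
  have "finite A \<Longrightarrow> A \<noteq> {} \<Longrightarrow> \<exists>t. \<forall>x\<in>A. le t x" for A
  proof (induct rule: finite_ne_induct)
    case (singleton x) then show ?case using refl by blast
  next
    case (insert x F)
    then obtain t where "\<forall>x\<in>F. le t x" by blast
    then show ?case using mt1 mt2 trans by blast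
  qed
  from this[of UNIV] fin show ?thesis by auto
qed

lemma maxch_contains:
  assumes "maxch F" "\<forall>g\<in>F. le g z \<or> le z g" shows "z \<in> F"
proof -
  have "chainL (insert z F)" using assms refl unfolding maxch_def chainL_def by blast
  then have "insert z F = F" using assms(1) unfolding maxch_def by blast
  then show ?thesis by blast
qed

lemma ext_in: "maxch F \<Longrightarrow> \<forall>x. le x t \<Longrightarrow> t \<in> F"
  using maxch_contains by blast
lemma bot_in: "maxch F \<Longrightarrow> \<forall>x. le b x \<Longrightarrow> b \<in> F"
  using maxch_contains by blast

lemma fin_max: "finite A \<Longrightarrow> A \<noteq> {} \<Longrightarrow> \<exists>m\<in>A. \<forall>a\<in>A. le m a \<longrightarrow> a = m"
proof (induct rule: finite_ne_induct)
  case (singleton x) then show ?case by blast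
next
  case (insert x F)
  then obtain m where m: "m \<in> F" "\<forall>a\<in>F. le m a \<longrightarrow> a = m" by blast
  show ?case
  proof (cases "le m x")
    case True
    have "\<forall>a\<in>insert x F. le x a \<longrightarrow> a = x"
      using m True trans antisym by blast
    then show ?thesis by blast
  next
    case False
    then show ?thesis using m by blast
  qed
qed

lemma fin_min: "finite A \<Longrightarrow> A \<noteq> {} \<Longrightarrow> \<exists>m\<in>A. \<forall>a\<in>A. le a m \<longrightarrow> a = m"
proof (induct rule: finite_ne_induct)
  case (singleton x) then show ?case by blast
next
  case (insert x F)
  then obtain m where m: "m \<in> F" "\<forall>a\<in>F. le a m \<longrightarrow> a = m" by blast
  show ?case
  proof (cases "le x m")
    case True
    have "\<forall>a\<in>insert x F. le a x \<longrightarrow> a = x"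
      using m True trans antisym by blast
    then show ?thesis by blast
  next
    case False
    then show ?thesis using m by blast
  qed
qed

lemma succ:
  assumes G: "maxch G" and v: "v \<in> G" and g: "g \<in> G" "\<not> le g v"
  shows "\<exists>w\<in>G. cover v w"
proof -
  let ?A = "{h\<in>G. le v h \<and> h \<noteq> v}"
  have ch: "chainL G" using G maxch_def by blast
  have "g \<in> ?A" using g v ch refl unfolding chainL_def by blast
  moreover have "finite ?A" using fin by (rule finite_subset[rotated]) auto
  ultimately obtain w where w: "w \<in> ?A" "\<forall>a\<in>?A. le a w \<longrightarrow> a = w"
    using fin_min[of ?A] by blast
  have wmin: "le w h" if "h \<in> ?A" for h
  proof -
    have "le w h \<or> le h w" using ch w(1) that unfolding chainL_def by blast
    then show ?thesis using w(2) that refl by metis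
  qed
  have "cover v w"
    unfolding cover_def
  proof (intro conjI allI impI)
    show "le v w" "v \<noteq> w" using w by auto
    fix z assume z: "le v z \<and> le z w"
    show "z = v \<or> z = w"
    proof (rule ccontr)
      assume nz: "\<not> (z = v \<or> z = w)"
      have "\<forall>h\<in>G. le h z \<or> le z h"
      proof
        fix h assume h: "h \<in> G"
        have "le h v \<or> le v h" using ch h v unfolding chainL_def by blast
        then show "le h z \<or> le z h"
        proof
          assume "le h v" then show ?thesis using z trans by blast
        next
          assume hv: "le v h"
          show ?thesis
          proof (cases "h = v")
            case True then show ?thesis using z by blast
          next
            case False
            then have "h \<in> ?A" using h hv by blast
            then have "le w h" by (rule wmin)
            then show ?thesis using z trans by blast
          qed
        qed
      qed
      then have "z \<in> G" using maxch_contains G by blast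
      then have "z \<in> ?A" using z nz by blast
      then have "le w z" by (rule wmin)
      then show False using z antisym nz by blast
    qed
  qed
  then show ?thesis using w by blast
qed

lemma pred:
  assumes G: "maxch G" and v: "v \<in> G" and g: "g \<in> G" "\<not> le v g"
  shows "\<exists>u\<in>G. cover u v"
proof -
  let ?A = "{h\<in>G. le h v \<and> h \<noteq> v}"
  have ch: "chainL G" using G maxch_def by blast
  have "g \<in> ?A" using g v ch refl unfolding chainL_def by blast
  moreover have "finite ?A" using fin by (rule finite_subset[rotated]) auto
  ultimately obtain w where w: "w \<in> ?A" "\<forall>a\<in>?A. le w a \<longrightarrow> a = w"
    using fin_max[of ?A] by blast
  have wmax: "le h w" if "h \<in> ?A" for h
  proof -
    have "le w h \<or> le h w" using ch w(1) that unfolding chainL_def by blast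
    then show ?thesis using w(2) that refl by metis
  qed
  have "cover w v"
    unfolding cover_def
  proof (intro conjI allI impI)
    show "le w v" "w \<noteq> v" using w by auto
    fix z assume z: "le w z \<and> le z v"
    show "z = w \<or> z = v"
    proof (rule ccontr)
      assume nz: "\<not> (z = w \<or> z = v)"
      have "\<forall>h\<in>G. le h z \<or> le z h"
      proof
        fix h assume h: "h \<in> G"
        have "le h v \<or> le v h" using ch h v unfolding chainL_def by blast
        then show "le h z \<or> le z h"
        proof
          assume "le v h" then show ?thesis using z trans by blast
        next
          assume hv: "le h v"
          show ?thesis
          proof (cases "h = v")
            case True then show ?thesis using z by blast
          next
            case False
            then have "h \<in> ?A" using h hv by blast
            then have "le h w" by (rule wmax)
            then show ?thesis using z trans by blast
          qed
        qed
      qed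
      then have "z \<in> G" using maxch_contains G by blast
      then have "z \<in> ?A" using z nz by blast
      then have "le z w" by (rule wmax)
      then show False using z antisym nz by blast
    qed
  qed
  then show ?thesis using w by blast
qed


lemma key:
  assumes LP: LPa and G: "maxch G" and H: "maxch H" and v: "v \<in> G" "v \<notin> H"
    and sub: "G - {v} \<subseteq> H"
  shows "Lab G \<subseteq> Lab H"
proof
  fix l assume "l \<in> Lab G"
  then obtain x y where xy: "x \<in> G" "y \<in> G" "cover x y" "islab x y l" unfolding Lab_def by blast
  obtain t where t: "\<forall>x. le x t" using top_ex by blast
  obtain b where b: "\<forall>x. le b x" using bot_ex by blast
  have tG: "t \<in> G" "t \<in> H" using ext_in G H t by auto
  have bG: "b \<in> G" "b \<in> H" using bot_in G H b by auto
  have tv: "t \<noteq> v" "b \<noteq> v" using tG bG v by auto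
  have chH: "chainL H" using H maxch_def by blast
  have cov: "le x y" "x \<noteq> y" "\<And>z. le x z \<Longrightarrow> le z y \<Longrightarrow> z = x \<or> z = y"
    using xy(3) unfolding cover_def by auto
  have lab: "le l y" "\<not> le l x" "\<And>z. le z y \<Longrightarrow> \<not> le z x \<Longrightarrow> le l z"
    using xy(4) unfolding islab_def by auto
  consider (a) "x \<noteq> v" "y \<noteq> v" | (b) "y = v" | (c) "x = v" by blast
  then show "l \<in> Lab H"
  proof cases
    case a
    then have "x \<in> H" "y \<in> H" using sub xy by auto
    then show ?thesis using xy unfolding Lab_def by blast
  next
    case b
    have "\<not> le t v" using t antisym tv by blast
    then obtain w where w: "w \<in> G" "cover v w" using succ[OF G v(1) tG(1)] by blast
    have wv: "le v w" "w \<noteq> v" "\<And>z. le v z \<Longrightarrow> le z w \<Longrightarrow> z = v \<or> z = w"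
      using w(2) unfolding cover_def by auto
    have wH: "w \<in> H" using sub w wv by blast
    have xH: "x \<in> H" using sub xy cov b by blast
    have xw: "\<not> le w x" using cov b wv antisym trans by metis
    obtain y' where y': "y' \<in> H" "cover y' w" using pred[OF H wH xH xw] by blast
    have yc: "le y' w" "y' \<noteq> w" "\<And>z. le y' z \<Longrightarrow> le z w \<Longrightarrow> z = y' \<or> z = w"
      using y'(2) unfolding cover_def by auto
    have xw2: "le x w" using cov b wv trans by blast
    have xy': "le x y'"
    proof -
      have "le x y' \<or> le y' x" using chH xH y'(1) unfolding chainL_def by blast
      then show ?thesis
      proof
        assume "le y' x"
        then have "x = y' \<or> x = w" using yc(3) xw2 by blast
        then show ?thesis using refl xw wv(1) by (metis cov(1) b)
      qed
    qed
    obtain h where h: "islab y' w h" using LP y'(2) unfolding LPa_def by blast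
    have hh: "le h w" "\<not> le h y'" "\<And>z. le z w \<Longrightarrow> \<not> le z y' \<Longrightarrow> le h z"
      using h unfolding islab_def by auto
    have nly: "\<not> le l y'"
    proof
      assume ly: "le l y'"
      let ?m = "mt v y'"
      have "le x ?m" using mt3 cov(1) b xy' by blast
      moreover have "le ?m v" by (rule mt1)
      ultimately have disj: "?m = x \<or> ?m = v" using cov(3) b by blast
      have "le l ?m" using mt3 lab(1) b ly by blast
      show False using disj
      proof
        assume "?m = x" then show False using \<open>le l ?m\<close> lab(2) by simp
      next
        assume "?m = v"
        then have "le v y'" using mt2 by metis
        then have "y' = v \<or> y' = w" using wv(3) yc(1) by blast
        then show False using y'(1) v(2) yc(2) by blast
      qed
    qed
    have "le l w" using lab(1) b wv(1) trans by blast
    then have hl: "le h l" using hh(3) nly by blast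
    have "le h y" using hl lab(1) trans by blast
    moreover have "\<not> le h x" using hh(2) xy' trans by blast
    ultimately have "le l h" using lab(3) by blast
    then have "l = h" using hl antisym by blast
    then show ?thesis using y' wH h unfolding Lab_def by blast
  next
    case c
    have "\<not> le v b" using b antisym tv by blast
    then obtain u where u: "u \<in> G" "cover u v" using pred[OF G v(1) bG(1)] by blast
    have uv: "le u v" "u \<noteq> v" "\<And>z. le u z \<Longrightarrow> le z v \<Longrightarrow> z = u \<or> z = v"
      using u(2) unfolding cover_def by auto
    have uH: "u \<in> H" using sub u uv by blast
    have yH: "y \<in> H" using sub xy cov c by blast
    have yu: "\<not> le y u" using cov c uv antisym trans by metis
    obtain y1 where y1: "y1 \<in> H" "cover u y1" using succ[OF H uH yH yu] by blast
    have yc: "le u y1" "u \<noteq> y1" "\<And>z. le u z \<Longrightarrow> le z y1 \<Longrightarrow> z = u \<or> z = y1"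
      using y1(2) unfolding cover_def by auto
    have uy: "le u y" using cov c uv trans by blast
    have y1y: "le y1 y"
    proof -
      have "le y1 y \<or> le y y1" using chH yH y1(1) unfolding chainL_def by blast
      then show ?thesis
      proof
        assume "le y y1"
        then have "y = u \<or> y = y1" using yc(3) uy by blast
        then show ?thesis using refl yu cov(1) c by metis
      qed
    qed
    obtain h where h: "islab u y1 h" using LP y1(2) unfolding LPa_def by blast
    have hh: "le h y1" "\<not> le h u" "\<And>z. le z y1 \<Longrightarrow> \<not> le z u \<Longrightarrow> le h z"
      using h unfolding islab_def by auto
    have nhv: "\<not> le h v"
    proof
      assume hv: "le h v"
      let ?m = "mt v y1"
      have "le u ?m" using mt3 uv(1) yc(1) by blast
      moreover have "le ?m v" by (rule mt1)
      ultimately have disj: "?m = u \<or> ?m = v" using uv(3) by blast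
      have "le h ?m" using mt3 hv hh(1) by blast
      show False using disj
      proof
        assume "?m = u" then show False using \<open>le h ?m\<close> hh(2) by simp
      next
        assume "?m = v"
        then have "le v y1" using mt2 by metis
        then have "y1 = v \<or> y1 = y" using cov(3) c y1y by blast
        then show False
        proof
          assume "y1 = v" then show False using y1(1) v(2) by blast
        next
          assume "y1 = y"
          then have "v = u \<or> v = y" using yc(3) uv(1) cov(1) c by blast
          then show False using uv(2) cov(2) c by blast
        qed
      qed
    qed
    have "le h y" using hh(1) y1y trans by blast
    then have lh: "le l h" using lab(3) nhv c by blast
    have "le l y1" using lh hh(1) trans by blast
    moreover have "\<not> le l u" using lab(2) c uv(1) trans by blast
    ultimately have "le h l" using hh(3) by blast
    then have "l = h" using lh antisym by blast
    then show ?thesis using y1 uH h unfolding Lab_def by blast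
  qed
qed

lemma lab_jirr: assumes "cover x y" "islab x y l" shows "jirr l"
proof -
  have lab: "le l y" "\<not> le l x" "\<And>z. le z y \<Longrightarrow> \<not> le z x \<Longrightarrow> le l z"
    using assms(2) unfolding islab_def by auto
  have "l = a \<or> l = b" if "l = jn a b" for a b
  proof (rule ccontr)
    assume n: "\<not> (l = a \<or> l = b)"
    have "le a l" "le b l" using that jn1 jn2 by auto
    then have "le a y" "le b y" using lab(1) trans by blast+
    have "le a x"
    proof (rule ccontr)
      assume "\<not> le a x" then have "le l a" using lab(3) \<open>le a y\<close> by blast
      then show False using \<open>le a l\<close> antisym n by blast
    qed
    moreover have "le b x"
    proof (rule ccontr)
      assume "\<not> le b x" then have "le l b" using lab(3) \<open>le b y\<close> by blast
      then show False using \<open>le b l\<close> antisym n by blast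
    qed
    ultimately have "le l x" using that jn3 by blast
    then show False using lab(2) by blast
  qed
  then show ?thesis unfolding jirr_def using lab(2) by blast
qed

lemma Lab_jirr: "Lab G \<subseteq> {x. jirr x}"
  unfolding Lab_def using lab_jirr by blast

lemma finite_sets: "finite (A :: 'a set set)"
  using fin by (metis finite_Pow_iff finite_subset subset_UNIV Pow_UNIV)

lemma ext_chain: assumes "chainL A" shows "\<exists>G. maxch G \<and> A \<subseteq> G"
proof -
  let ?X = "{G. chainL G \<and> A \<subseteq> G}"
  have "finite ?X" by (rule finite_sets)
  moreover have "A \<in> ?X" using assms by blast
  ultimately obtain G where G: "G \<in> ?X" "\<forall>b\<in>?X. G \<subseteq> b \<longrightarrow> G = b"
    using finite_has_maximal[of ?X] by blast
  then have "maxch G" unfolding maxch_def by blast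
  then show ?thesis using G by blast
qed

lemma jirr_lab: assumes LP: LPa and j: "jirr j" shows "\<exists>G. maxch G \<and> j \<in> Lab G"
proof -
  obtain b where b: "\<forall>x. le b x" using bot_ex by blast
  have "b \<noteq> j" using j b unfolding jirr_def by blast
  let ?A = "{z. le z j \<and> z \<noteq> j}"
  have "b \<in> ?A" using b \<open>b \<noteq> j\<close> by blast
  moreover have "finite ?A" using fin by (rule finite_subset[rotated]) auto
  ultimately obtain m where m: "m \<in> ?A" "\<forall>a\<in>?A. le m a \<longrightarrow> a = m"
    using fin_max[of ?A] by blast
  have cmj: "cover m j" unfolding cover_def using m by blast
  obtain l where l: "islab m j l" using LP cmj unfolding LPa_def by blast
  have lab: "le l j" "\<not> le l m" using l unfolding islab_def by auto
  have "l = j"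
  proof (rule ccontr)
    assume lj: "l \<noteq> j"
    have "le m (jn l m)" by (rule jn2)
    moreover have "le (jn l m) j" using jn3 lab(1) m(1) by blast
    ultimately have "jn l m = m \<or> jn l m = j" using cmj unfolding cover_def by blast
    then show False
    proof
      assume "jn l m = m" then show False using jn1[of l m] lab(2) by simp
    next
      assume "jn l m = j" then have "j = l \<or> j = m" using j unfolding jirr_def by metis
      then show False using lj m(1) by blast
    qed
  qed
  have "chainL {m, j}" unfolding chainL_def using m(1) refl by blast
  then obtain G where G: "maxch G" "{m, j} \<subseteq> G" using ext_chain by blast
  then have "j \<in> Lab G" unfolding Lab_def using cmj l \<open>l = j\<close> by blast
  then show ?thesis using G by blast
qed

lemma cover_uniq: assumes "chainL F" "y \<in> F" "y' \<in> F" "cover x y" "cover x y'" shows "y = y'"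
proof -
  have "le y y' \<or> le y' y" using assms unfolding chainL_def by blast
  then show ?thesis using assms unfolding cover_def by blast
qed

lemma islab_uniq: "islab x y l \<Longrightarrow> islab x y l' \<Longrightarrow> l = l'"
  unfolding islab_def using antisym by blast

lemma card_Lab_le: assumes F: "maxch F" shows "card (Lab F) + 1 \<le> card F"
proof -
  obtain t where t: "\<forall>x. le x t" using top_ex by blast
  have tF: "t \<in> F" using ext_in F t by blast
  have ch: "chainL F" using F maxch_def by blast
  define g where "g x = (SOME l. \<exists>y\<in>F. cover x y \<and> islab x y l)" for x
  have "Lab F \<subseteq> g ` (F - {t})"
  proof
    fix l assume "l \<in> Lab F"
    then obtain x y where xy: "x \<in> F" "y \<in> F" "cover x y" "islab x y l" unfolding Lab_def by blast
    then have "\<exists>l y. y \<in> F \<and> cover x y \<and> islab x y l" by blast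
    then have "\<exists>y\<in>F. cover x y \<and> islab x y (g x)" unfolding g_def by (metis (mono_tags, lifting) someI_ex)
    then obtain y' where y': "y' \<in> F" "cover x y'" "islab x y' (g x)" by blast
    have "y = y'" using cover_uniq ch xy y' by blast
    then have "g x = l" using islab_uniq xy y' by blast
    moreover have "x \<noteq> t" using xy(3) t antisym unfolding cover_def by blast
    ultimately show "l \<in> g ` (F - {t})" using xy by blast
  qed
  moreover have "finite F" using fin by (rule finite_subset[rotated]) auto
  ultimately have "card (Lab F) \<le> card (F - {t})" by (meson card_image_le finite_Diff card_mono finite_imageI le_trans)
  moreover have "card (F - {t}) + 1 = card F" using tF \<open>finite F\<close>
    by (simp add: card_Diff_singleton) (metis Suc_pred card_gt_0_iff empty_iff)
  ultimately show ?thesis by linarith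
qed

lemma card_le_Lab: assumes LP: LPa and G: "maxch G" shows "card G \<le> card (Lab G) + 1"
proof -
  obtain t where t: "\<forall>x. le x t" using top_ex by blast
  have tG: "t \<in> G" using ext_in G t by blast
  have ch: "chainL G" using G maxch_def by blast
  define g where "g x = (SOME l. \<exists>y\<in>G. cover x y \<and> islab x y l)" for x
  have gx: "\<exists>y\<in>G. cover x y \<and> islab x y (g x)" if "x \<in> G - {t}" for x
  proof -
    have "\<not> le t x" using that t antisym by blast
    moreover have "x \<in> G" using that by blast
    ultimately obtain y where y: "y \<in> G" "cover x y" using succ[OF G _ tG] by blast
    then obtain l where "islab x y l" using LP unfolding LPa_def by blast
    then have "\<exists>l y. y \<in> G \<and> cover x y \<and> islab x y l" using y by blast
    then show ?thesis unfolding g_def by (metis (mono_tags, lifting) someI_ex)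
  qed
  have img: "g ` (G - {t}) \<subseteq> Lab G" unfolding Lab_def using gx by blast
  have neq: "g x1 \<noteq> g x2" if nx: "x1 \<in> G - {t}" "x2 \<in> G - {t}" "le x1 x2" "x1 \<noteq> x2" for x1 x2
  proof -
    obtain y1 where y1: "y1 \<in> G" "cover x1 y1" "islab x1 y1 (g x1)" using gx nx(1) by blast
    obtain y2 where y2: "y2 \<in> G" "cover x2 y2" "islab x2 y2 (g x2)" using gx nx(2) by blast
    have "le y1 x2"
    proof -
      have "le y1 x2 \<or> le x2 y1" using ch y1(1) nx(2) unfolding chainL_def by blast
      then show ?thesis using y1(2) nx(3,4) refl unfolding cover_def by blast
    qed
    then have "le (g x1) x2" using y1(3) trans unfolding islab_def by blast
    moreover have "\<not> le (g x2) x2" using y2(3) unfolding islab_def by blast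
    ultimately show ?thesis by auto
  qed
  have "inj_on g (G - {t})"
  proof (rule inj_onI)
    fix x1 x2 assume a: "x1 \<in> G - {t}" "x2 \<in> G - {t}" "g x1 = g x2"
    show "x1 = x2"
    proof (rule ccontr)
      assume ne: "x1 \<noteq> x2"
      have "le x1 x2 \<or> le x2 x1" using ch a unfolding chainL_def by blast
      then show False
      proof
        assume "le x1 x2" then show False using neq[OF a(1) a(2) _ ne] a(3) by blast
      next
        assume "le x2 x1" then show False using neq[OF a(2) a(1) _ ne[symmetric]] a(3) by simp
      qed
    qed
  qed
  moreover have "finite (Lab G)" using fin by (rule finite_subset[rotated]) auto
  ultimately have c: "card (G - {t}) \<le> card (Lab G)"
    using card_inj_on_le img by blast
  have "finite G" using fin by (rule finite_subset[rotated]) auto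
  then have "card (G - {t}) = card G - 1" using tG by (simp add: card_Diff_singleton)
  then show ?thesis using c by linarith
qed

definition shelling_cond :: "'a set list \<Rightarrow> bool" where
  "shelling_cond Fs \<longleftrightarrow> distinct Fs \<and> set Fs = {F. maxch F} \<and>
     (\<forall>k. 0 < k \<longrightarrow> k < length Fs \<longrightarrow> (\<exists>i<k. \<exists>v\<in>Fs!k. Fs!k - {v} \<subseteq> Fs!i))"

lemma shell_Lab: assumes LP: LPa and S: "shelling_cond Fs"
  shows "k < length Fs \<Longrightarrow> Lab (Fs!k) \<subseteq> Lab (Fs!0)"
proof (induct k rule: less_induct)
  case (less k)
  have dist: "distinct Fs" and setF: "set Fs = {F. maxch F}"
    and step: "\<And>k. 0 < k \<Longrightarrow> k < length Fs \<Longrightarrow> (\<exists>i<k. \<exists>v\<in>Fs!k. Fs!k - {v} \<subseteq> Fs!i)"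
    using S unfolding shelling_cond_def by auto
  show ?case
  proof (cases "k = 0")
    case True then show ?thesis by simp
  next
    case False
    then have "0 < k" by simp
    from step[OF this less.prems] obtain i v where iv: "i < k" "v \<in> Fs!k" "Fs!k - {v} \<subseteq> Fs!i"
      by blast
    have il: "i < length Fs" using iv(1) less.prems by simp
    have "Fs!k \<in> set Fs" "Fs!i \<in> set Fs" using il less.prems by simp_all
    then have mk: "maxch (Fs!k)" "maxch (Fs!i)" using setF by auto
    have "v \<notin> Fs!i"
    proof
      assume "v \<in> Fs!i"
      then have "Fs!k \<subseteq> Fs!i" using iv by blast
      then have "Fs!i = Fs!k" using mk unfolding maxch_def by blast
      then have "i = k" using dist il less.prems nth_eq_iff_index_eq by blast
      then show False using iv(1) by simp
    qed
    then have "Lab (Fs!k) \<subseteq> Lab (Fs!i)" using key[OF LP mk iv(2)] iv(3) by blast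
    moreover have "Lab (Fs!i) \<subseteq> Lab (Fs!0)" using less.hyps[OF iv(1) il] .
    ultimately show ?thesis by blast
  qed
qed

theorem main_loc: assumes LP: LPa and S: "shelling_cond Fs"
  shows "Max {card S - 1 |S. chainL S} = card {x. jirr x}"
proof -
  have setF: "set Fs = {F. maxch F}" using S unfolding shelling_cond_def by blast
  obtain G0 where "maxch G0" using ext_chain[of "{}"] unfolding chainL_def by blast
  then have "G0 \<in> set Fs" using setF by blast
  then have ne: "Fs \<noteq> []" by (cases Fs) auto
  then have "Fs!0 \<in> set Fs" by simp
  then have F0: "maxch (Fs!0)" using setF by blast
  have "{x. jirr x} \<subseteq> Lab (Fs!0)"
  proof
    fix j assume "j \<in> {x. jirr x}"
    then obtain G where G: "maxch G" "j \<in> Lab G" using jirr_lab LP by blast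
    then have "G \<in> set Fs" using setF by blast
    then obtain k where k: "k < length Fs" "G = Fs!k" by (metis in_set_conv_nth)
    have "Lab (Fs!k) \<subseteq> Lab (Fs!0)" using shell_Lab[OF LP S k(1)] .
    then show "j \<in> Lab (Fs!0)" using k(2) G(2) by blast
  qed
  then have J: "Lab (Fs!0) = {x. jirr x}" using Lab_jirr by blast
  have finJ: "finite {x. jirr x}" using fin by (rule finite_subset[rotated]) auto
  have c1: "card {x. jirr x} + 1 \<le> card (Fs!0)" using card_Lab_le[OF F0] J by simp
  have c2: "card S - 1 \<le> card {x. jirr x}" if cS: "chainL S" for S
  proof -
    obtain G where G: "maxch G" "S \<subseteq> G" using ext_chain cS by blast
    have "finite G" using fin by (rule finite_subset[rotated]) auto
    then have "card S \<le> card G" using G(2) by (rule card_mono)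
    also have "\<dots> \<le> card (Lab G) + 1" using card_le_Lab[OF LP G(1)] .
    also have "card (Lab G) \<le> card {x. jirr x}" using Lab_jirr finJ by (rule card_mono[rotated])
    then have "card (Lab G) + 1 \<le> card {x. jirr x} + 1" by simp
    finally show ?thesis by simp
  qed
  have ch0: "chainL (Fs!0)" using F0 maxch_def by blast
  have eq: "card (Fs!0) - 1 = card {x. jirr x}" using c1 c2[OF ch0] by linarith
  have img: "{card S - 1 |S. chainL S} = (\<lambda>S. card S - 1) ` {S. chainL S}" by blast
  have "finite {S. chainL S}" by (rule finite_sets)
  then have finM: "finite {card S - 1 |S. chainL S}" unfolding img by (rule finite_imageI)
  have mem: "card {x. jirr x} \<in> {card S - 1 |S. chainL S}" using ch0 eq[symmetric] by (intro CollectI exI[of _ "Fs!0"]) simp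
  have ub: "\<forall>y\<in>{card S - 1 |S. chainL S}. y \<le> card {x. jirr x}" using c2 by blast
  show ?thesis using Max_eqI[OF finM _ mem] ub by blast
qed

end

lemma ble_refl: "ble x x" unfolding ble_def by (simp add: list_all2_refl)
lemma ble_trans: "ble x y \<Longrightarrow> ble y z \<Longrightarrow> ble x z"
  unfolding ble_def by (rule list_all2_trans[of "(\<le>)" "(\<le>)" "(\<le>)"]) auto
lemma ble_antisym: "ble x y \<Longrightarrow> ble y x \<Longrightarrow> x = y"
  unfolding ble_def by (rule list_all2_antisym[of "(\<le>)" "(\<le>)"]) auto
lemma ble_Cons[simp]: "ble (a#x) (b#y) \<longleftrightarrow> a \<le> b \<and> ble x y"
  unfolding ble_def by simp

lemma mem_doubling: "(b#x \<in> doubling L C) \<longleftrightarrow> (if b then x \<in> (L - down_closure L C) \<union> C else x \<in> down_closure L C)"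
  unfolding doubling_def by auto
lemma doubling_Cons: "z \<in> doubling L C \<Longrightarrow> \<exists>b x. z = b#x"
  unfolding doubling_def by auto

definition coverS :: "bool list set \<Rightarrow> bool list \<Rightarrow> bool list \<Rightarrow> bool" where
  "coverS L x y \<longleftrightarrow> x \<in> L \<and> y \<in> L \<and> ble x y \<and> x \<noteq> y \<and> (\<forall>z\<in>L. ble x z \<and> ble z y \<longrightarrow> z = x \<or> z = y)"
definition LPS :: "bool list set \<Rightarrow> bool" where
  "LPS L \<longleftrightarrow> (\<forall>x y. coverS L x y \<longrightarrow> (\<exists>l\<in>L. ble l y \<and> \<not> ble l x \<and> (\<forall>z\<in>L. ble z y \<and> \<not> ble z x \<longrightarrow> ble l z)))"
definition LPS' :: "bool list set \<Rightarrow> bool" where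
  "LPS' L \<longleftrightarrow> (\<forall>x y. coverS L x y \<longrightarrow> (\<exists>m\<in>L. ble x m \<and> \<not> ble y m \<and> (\<forall>z\<in>L. ble x z \<and> \<not> ble y z \<longrightarrow> ble z m)))"

lemma LPS_doubling:
  assumes IH: "LPS L" and CL: "C \<subseteq> L"
    and conv: "\<And>x y z. x \<in> C \<Longrightarrow> z \<in> C \<Longrightarrow> y \<in> L \<Longrightarrow> ble x y \<Longrightarrow> ble y z \<Longrightarrow> y \<in> C"
    and aC: "a \<in> C" and amin: "\<And>c. c \<in> C \<Longrightarrow> ble a c"
  shows "LPS (doubling L C)"
  unfolding LPS_def
proof (intro allI impI)
  define D where "D = down_closure L C"
  define L' where "L' = doubling L C"
  have memb: "\<And>b z. (b#z \<in> L') = (if b then z \<in> (L - D) \<union> C else z \<in> D)"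
    unfolding L'_def D_def by (rule mem_doubling)
  have DL: "D \<subseteq> L" unfolding D_def down_closure_def by auto
  have Ddown: "\<And>x z. x \<in> D \<Longrightarrow> z \<in> L \<Longrightarrow> ble z x \<Longrightarrow> z \<in> D"
    unfolding D_def down_closure_def using ble_trans by blast
  have CD: "C \<subseteq> D" unfolding D_def down_closure_def using CL ble_refl by blast
  have DC: "\<And>z. z \<in> D \<Longrightarrow> \<exists>c\<in>C. ble z c" unfolding D_def down_closure_def by blast
  have memL: "\<And>b z. b#z \<in> L' \<Longrightarrow> z \<in> L" using memb DL CL by (auto split: if_splits)
  fix x' y' assume "coverS (doubling L C) x' y'"
  then have cov: "x' \<in> L'" "y' \<in> L'" "ble x' y'" "x' \<noteq> y'"
    "\<And>z. z \<in> L' \<Longrightarrow> ble x' z \<Longrightarrow> ble z y' \<Longrightarrow> z = x' \<or> z = y'"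
    unfolding coverS_def L'_def by auto
  obtain bx x where x': "x' = bx#x" using doubling_Cons cov(1) unfolding L'_def by blast
  obtain yb y where y': "y' = yb#y" using doubling_Cons cov(2) unfolding L'_def by blast
  have xy: "ble x y" "bx \<le> yb" using cov(3) x' y' by auto
  have xL: "x \<in> L" and yL: "y \<in> L" using memL cov x' y' by auto
  show "\<exists>l\<in>doubling L C. ble l y' \<and> \<not> ble l x' \<and> (\<forall>z\<in>doubling L C. ble z y' \<and> \<not> ble z x' \<longrightarrow> ble l z)"
  proof (cases bx)
    case False
    then have xD: "x \<in> D" using cov(1) x' memb by simp
    show ?thesis
    proof (cases yb)
      case False
      then have yD: "y \<in> D" using cov(2) y' memb by simp
      have "coverS L x y" unfolding coverS_def
      proof (intro conjI ballI impI)
        show "x \<in> L" "y \<in> L" "ble x y" by (fact xL yL xy(1))+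
        show "x \<noteq> y" using cov(4) x' y' \<open>\<not>bx\<close> False by simp
        fix z assume z: "z \<in> L" "ble x z \<and> ble z y"
        then have "z \<in> D" using Ddown yD by blast
        then have "False#z \<in> L'" using memb by simp
        then have "False#z = x' \<or> False#z = y'" using cov(5)[of "False#z"] z x' y' \<open>\<not>bx\<close> False by simp
        then show "z = x \<or> z = y" using x' y' by auto
      qed
      then obtain l where l: "l \<in> L" "ble l y" "\<not> ble l x" "\<And>z. z \<in> L \<Longrightarrow> ble z y \<Longrightarrow> \<not> ble z x \<Longrightarrow> ble l z"
        using IH unfolding LPS_def by blast
      have "l \<in> D" using Ddown yD l by blast
      then have "False#l \<in> L'" using memb by simp
      moreover have "\<forall>z'\<in>L'. ble z' y' \<and> \<not> ble z' x' \<longrightarrow> ble (False#l) z'"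
      proof (intro ballI impI)
        fix z' assume z': "z' \<in> L'" "ble z' y' \<and> \<not> ble z' x'"
        obtain b z where zz: "z' = b#z" using doubling_Cons z'(1) unfolding L'_def by blast
        have "z \<in> L" using memL z'(1) zz by blast
        moreover have "ble z y" "\<not> ble z x" using z'(2) zz x' y' False \<open>\<not>bx\<close> by auto
        ultimately show "ble (False#l) z'" using l(4) zz by simp
      qed
      moreover have "ble (False#l) y'" "\<not> ble (False#l) x'" using l x' y' False \<open>\<not>bx\<close> by auto
      ultimately show ?thesis unfolding L'_def by blast
    next
      case True
      note byT = True
      show ?thesis
      proof (cases "x = y")
        case True
        then have xC: "x \<in> C" using cov(2) y' memb byT xD by auto
        have "True#a \<in> L'" using memb aC by simp
        moreover have "\<forall>z'\<in>L'. ble z' y' \<and> \<not> ble z' x' \<longrightarrow> ble (True#a) z'"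
        proof (intro ballI impI)
          fix z' assume z': "z' \<in> L'" "ble z' y' \<and> \<not> ble z' x'"
          obtain b z where zz: "z' = b#z" using doubling_Cons z'(1) unfolding L'_def by blast
          have b: "b" using z'(2) zz x' y' True \<open>\<not>bx\<close> by (cases b) auto
          have zx: "ble z x" using z'(2) zz x' y' True by auto
          have "z \<in> (L - D) \<union> C" using z'(1) zz b memb by simp
          moreover have "z \<in> D" using Ddown xD zx memL z'(1) zz by blast
          ultimately have "z \<in> C" by blast
          then show "ble (True#a) z'" using amin zz b by simp
        qed
        moreover have "ble (True#a) y'" "\<not> ble (True#a) x'" using x' y' True byT \<open>\<not>bx\<close> amin xC by auto
        ultimately show ?thesis unfolding L'_def by blast
      next
        case False
        note xny = False
        have yC: "y \<in> (L - D) \<union> C" using cov(2) y' memb byT by simp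
        have xnC: "x \<notin> C"
        proof
          assume "x \<in> C"
          then have "True#x \<in> L'" using memb by simp
          then have "True#x = x' \<or> True#x = y'" using cov(5)[of "True#x"] x' y' byT \<open>\<not>bx\<close> xy ble_refl by simp
          then show False using x' y' \<open>\<not>bx\<close> xny byT by simp
        qed
        have "coverS L x y" unfolding coverS_def
        proof (intro conjI ballI impI)
          show "x \<in> L" "y \<in> L" "ble x y" "x \<noteq> y" by (fact xL yL xy(1) xny)+
          fix z assume z: "z \<in> L" "ble x z \<and> ble z y"
          show "z = x \<or> z = y"
          proof (cases "z \<in> D")
            case True
            then have "False#z \<in> L'" using memb by simp
            then have "False#z = x' \<or> False#z = y'" using cov(5)[of "False#z"] z x' y' \<open>\<not>bx\<close> byT by simp
            then show ?thesis using x' y' by auto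
          next
            case False
            then have "True#z \<in> L'" using memb z by simp
            then have "True#z = x' \<or> True#z = y'" using cov(5)[of "True#z"] z x' y' \<open>\<not>bx\<close> byT by simp
            then show ?thesis using x' y' by auto
          qed
        qed
        then obtain l where l: "l \<in> L" "ble l y" "\<not> ble l x" "\<And>z. z \<in> L \<Longrightarrow> ble z y \<Longrightarrow> \<not> ble z x \<Longrightarrow> ble l z"
          using IH unfolding LPS_def by blast
        define w where "w = (if l \<in> D then False#l else True#l)"
        have "w \<in> L'" unfolding w_def using memb l(1) by simp
        moreover have "\<forall>z'\<in>L'. ble z' y' \<and> \<not> ble z' x' \<longrightarrow> ble w z'"
        proof (intro ballI impI)
          fix z' assume z': "z' \<in> L'" "ble z' y' \<and> \<not> ble z' x'"
          obtain b z where zz: "z' = b#z" using doubling_Cons z'(1) unfolding L'_def by blast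
          have zL: "z \<in> L" using memL z'(1) zz by blast
          have zy: "ble z y" using z'(2) zz y' by auto
          have nzx: "\<not> ble z x"
          proof
            assume zx: "ble z x"
            then have b: "b" using z'(2) zz x' \<open>\<not>bx\<close> by (cases b) auto
            have "z \<in> D" using Ddown xD zx zL by blast
            moreover have "z \<in> (L - D) \<union> C" using z'(1) zz b memb by simp
            ultimately have "z \<in> C" by blast
            moreover obtain c where "c \<in> C" "ble x c" using DC xD by blast
            ultimately have "x \<in> C" using conv xL zx by blast
            then show False using xnC by blast
          qed
          have lz: "ble l z" using l(4) zL zy nzx by blast
          show "ble w z'"
          proof (cases "l \<in> D")
            case True then show ?thesis unfolding w_def using zz lz by simp
          next
            case False
            have "b" proof (rule ccontr)
              assume "\<not> b" then have "z \<in> D" using z'(1) zz memb by simp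
              then have "l \<in> D" using Ddown l(1) lz by blast
              then show False using False by blast
            qed
            then show ?thesis unfolding w_def using zz lz False by simp
          qed
        qed
        moreover have "ble w y'" "\<not> ble w x'" unfolding w_def using l x' y' byT \<open>\<not>bx\<close> by auto
        ultimately show ?thesis unfolding L'_def by blast
      qed
    qed
  next
    case True
    note bxT = True
    then have byT: "yb" using xy(2) by simp
    have xC: "x \<in> (L - D) \<union> C" using cov(1) x' memb bxT by simp
    have yC: "y \<in> (L - D) \<union> C" using cov(2) y' memb byT by simp
    have "coverS L x y" unfolding coverS_def
    proof (intro conjI ballI impI)
      show "x \<in> L" "y \<in> L" "ble x y" by (fact xL yL xy(1))+
      show "x \<noteq> y" using cov(4) x' y' bxT byT by simp
      fix z assume z: "z \<in> L" "ble x z \<and> ble z y"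
      have "z \<in> (L - D) \<union> C"
      proof (rule ccontr)
        assume nz: "z \<notin> (L - D) \<union> C"
        then have zD: "z \<in> D" using z by blast
        then have "x \<in> D" using Ddown z xL by blast
        then have "x \<in> C" using xC by blast
        moreover obtain c where "c \<in> C" "ble z c" using DC zD by blast
        ultimately have "z \<in> C" using conv z by blast
        then show False using nz by blast
      qed
      then have "True#z \<in> L'" using memb by simp
      then have "True#z = x' \<or> True#z = y'" using cov(5)[of "True#z"] z x' y' bxT byT by simp
      then show "z = x \<or> z = y" using x' y' by auto
    qed
    then obtain l where l: "l \<in> L" "ble l y" "\<not> ble l x" "\<And>z. z \<in> L \<Longrightarrow> ble z y \<Longrightarrow> \<not> ble z x \<Longrightarrow> ble l z"
      using IH unfolding LPS_def by blast
    define w where "w = (if l \<in> D then False#l else True#l)"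
    have "w \<in> L'" unfolding w_def using memb l(1) by simp
    moreover have "\<forall>z'\<in>L'. ble z' y' \<and> \<not> ble z' x' \<longrightarrow> ble w z'"
    proof (intro ballI impI)
      fix z' assume z': "z' \<in> L'" "ble z' y' \<and> \<not> ble z' x'"
      obtain b z where zz: "z' = b#z" using doubling_Cons z'(1) unfolding L'_def by blast
      have zL: "z \<in> L" using memL z'(1) zz by blast
      have zy: "ble z y" "\<not> ble z x" using z'(2) zz y' x' bxT byT by auto
      have lz: "ble l z" using l(4) zL zy by blast
      show "ble w z'"
      proof (cases "l \<in> D")
        case True then show ?thesis unfolding w_def using zz lz by simp
      next
        case False
        have "b" proof (rule ccontr)
          assume "\<not> b" then have "z \<in> D" using z'(1) zz memb by simp
          then have "l \<in> D" using Ddown l(1) lz by blast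
          then show False using False by blast
        qed
        then show ?thesis unfolding w_def using zz lz False by simp
      qed
    qed
    moreover have "ble w y'" "\<not> ble w x'" unfolding w_def using l x' y' byT bxT by auto
    ultimately show ?thesis unfolding L'_def by blast
  qed
qed

lemma LPS'_doubling:
  assumes IH: "LPS' L" and CL: "C \<subseteq> L"
    and conv: "\<And>x y z. x \<in> C \<Longrightarrow> z \<in> C \<Longrightarrow> y \<in> L \<Longrightarrow> ble x y \<Longrightarrow> ble y z \<Longrightarrow> y \<in> C"
    and aC: "a \<in> C" and amax: "\<And>c. c \<in> C \<Longrightarrow> ble c a"
  shows "LPS' (doubling L C)"
  unfolding LPS'_def
proof (intro allI impI)
  define D where "D = down_closure L C"
  define L' where "L' = doubling L C"
  have memb: "\<And>b z. (b#z \<in> L') = (if b then z \<in> (L - D) \<union> C else z \<in> D)"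
    unfolding L'_def D_def by (rule mem_doubling)
  have DL: "D \<subseteq> L" unfolding D_def down_closure_def by auto
  have Ddown: "\<And>x z. x \<in> D \<Longrightarrow> z \<in> L \<Longrightarrow> ble z x \<Longrightarrow> z \<in> D"
    unfolding D_def down_closure_def using ble_trans by blast
  have CD: "C \<subseteq> D" unfolding D_def down_closure_def using CL ble_refl by blast
  have DC: "\<And>z. z \<in> D \<Longrightarrow> \<exists>c\<in>C. ble z c" unfolding D_def down_closure_def by blast
  have memL: "\<And>b z. b#z \<in> L' \<Longrightarrow> z \<in> L" using memb DL CL by (auto split: if_splits)
  define W where "W m = (if m \<in> (L - D) \<union> C then True#m else False#m)" for m
  have Wmem: "W m \<in> L'" if "m \<in> L" for m unfolding W_def using memb that by auto
  have Wge: "ble (b#z) (W m)" if "b#z \<in> L'" "ble z m" "m \<in> L" for b z m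
  proof (cases "m \<in> (L - D) \<union> C")
    case True then show ?thesis unfolding W_def using that by simp
  next
    case False
    then have mD: "m \<in> D" "m \<notin> C" using that(3) by auto
    have "\<not> b"
    proof
      assume b: b
      then have "z \<in> (L - D) \<union> C" using that(1) memb by simp
      moreover have "z \<in> D" using Ddown mD(1) that memL by blast
      ultimately have "z \<in> C" by blast
      moreover obtain c where "c \<in> C" "ble m c" using DC mD(1) by blast
      ultimately have "m \<in> C" using conv that(2,3) by blast
      then show False using mD by blast
    qed
    then show ?thesis unfolding W_def using False that by simp
  qed
  fix x' y' assume "coverS (doubling L C) x' y'"
  then have cov: "x' \<in> L'" "y' \<in> L'" "ble x' y'" "x' \<noteq> y'"
    "\<And>z. z \<in> L' \<Longrightarrow> ble x' z \<Longrightarrow> ble z y' \<Longrightarrow> z = x' \<or> z = y'"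
    unfolding coverS_def L'_def by auto
  obtain bx x where x': "x' = bx#x" using doubling_Cons cov(1) unfolding L'_def by blast
  obtain yb y where y': "y' = yb#y" using doubling_Cons cov(2) unfolding L'_def by blast
  have xy: "ble x y" "bx \<le> yb" using cov(3) x' y' by auto
  have xL: "x \<in> L" and yL: "y \<in> L" using memL cov x' y' by auto
  show "\<exists>m\<in>doubling L C. ble x' m \<and> \<not> ble y' m \<and> (\<forall>z\<in>doubling L C. ble x' z \<and> \<not> ble y' z \<longrightarrow> ble z m)"
  proof (cases bx)
    case False
    then have xD: "x \<in> D" using cov(1) x' memb by simp
    show ?thesis
    proof (cases yb)
      case False
      then have yD: "y \<in> D" using cov(2) y' memb by simp
      have "coverS L x y" unfolding coverS_def
      proof (intro conjI ballI impI)
        show "x \<in> L" "y \<in> L" "ble x y" by (fact xL yL xy(1))+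
        show "x \<noteq> y" using cov(4) x' y' \<open>\<not>bx\<close> False by simp
        fix z assume z: "z \<in> L" "ble x z \<and> ble z y"
        then have "z \<in> D" using Ddown yD by blast
        then have "False#z \<in> L'" using memb by simp
        then have "False#z = x' \<or> False#z = y'" using cov(5)[of "False#z"] z x' y' \<open>\<not>bx\<close> False by simp
        then show "z = x \<or> z = y" using x' y' by auto
      qed
      then obtain m where m: "m \<in> L" "ble x m" "\<not> ble y m" "\<And>z. z \<in> L \<Longrightarrow> ble x z \<Longrightarrow> \<not> ble y z \<Longrightarrow> ble z m"
        using IH unfolding LPS'_def by blast
      have "W m \<in> L'" using Wmem m(1) .
      moreover have "\<forall>z'\<in>L'. ble x' z' \<and> \<not> ble y' z' \<longrightarrow> ble z' (W m)"
      proof (intro ballI impI)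
        fix z' assume z': "z' \<in> L'" "ble x' z' \<and> \<not> ble y' z'"
        obtain b z where zz: "z' = b#z" using doubling_Cons z'(1) unfolding L'_def by blast
        have "z \<in> L" using memL z'(1) zz by blast
        moreover have "ble x z" "\<not> ble y z" using z'(2) zz x' y' False \<open>\<not>bx\<close> by auto
        ultimately have "ble z m" using m(4) by blast
        then show "ble z' (W m)" using Wge z'(1) zz m(1) by blast
      qed
      moreover have "ble x' (W m)" "\<not> ble y' (W m)" unfolding W_def using m x' y' False \<open>\<not>bx\<close> by auto
      ultimately show ?thesis unfolding L'_def by blast
    next
      case True
      note byT = True
      show ?thesis
      proof (cases "x = y")
        case True
        then have xC: "x \<in> C" using cov(2) y' memb byT xD by auto
        have "False#a \<in> L'" using memb aC CD by auto
        moreover have "\<forall>z'\<in>L'. ble x' z' \<and> \<not> ble y' z' \<longrightarrow> ble z' (False#a)"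
        proof (intro ballI impI)
          fix z' assume z': "z' \<in> L'" "ble x' z' \<and> \<not> ble y' z'"
          obtain b z where zz: "z' = b#z" using doubling_Cons z'(1) unfolding L'_def by blast
          have xz: "ble x z" using z'(2) zz x' by auto
          have b: "\<not> b" using z'(2) zz x' y' True byT xz by (cases b) auto
          have "z \<in> D" using z'(1) zz b memb by simp
          then obtain c where "c \<in> C" "ble z c" using DC by blast
          then have "z \<in> C" using conv xC xz memL z'(1) zz by blast
          then show "ble z' (False#a)" using amax zz b by simp
        qed
        moreover have "ble x' (False#a)" "\<not> ble y' (False#a)" using x' y' True byT \<open>\<not>bx\<close> amax xC by auto
        ultimately show ?thesis unfolding L'_def by blast
      next
        case False
        note xny = False
        have yC: "y \<in> (L - D) \<union> C" using cov(2) y' memb byT by simp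
        have ynD: "y \<notin> D"
        proof
          assume "y \<in> D"
          then have "False#y \<in> L'" using memb by simp
          then have "False#y = x' \<or> False#y = y'" using cov(5)[of "False#y"] x' y' byT \<open>\<not>bx\<close> xy ble_refl by simp
          then show False using x' y' \<open>\<not>bx\<close> xny byT by simp
        qed
        have "coverS L x y" unfolding coverS_def
        proof (intro conjI ballI impI)
          show "x \<in> L" "y \<in> L" "ble x y" "x \<noteq> y" by (fact xL yL xy(1) xny)+
          fix z assume z: "z \<in> L" "ble x z \<and> ble z y"
          show "z = x \<or> z = y"
          proof (cases "z \<in> D")
            case True
            then have "False#z \<in> L'" using memb by simp
            then have "False#z = x' \<or> False#z = y'" using cov(5)[of "False#z"] z x' y' \<open>\<not>bx\<close> byT by simp
            then show ?thesis using x' y' by auto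
          next
            case False
            then have "True#z \<in> L'" using memb z by simp
            then have "True#z = x' \<or> True#z = y'" using cov(5)[of "True#z"] z x' y' \<open>\<not>bx\<close> byT by simp
            then show ?thesis using x' y' by auto
          qed
        qed
        then obtain m where m: "m \<in> L" "ble x m" "\<not> ble y m" "\<And>z. z \<in> L \<Longrightarrow> ble x z \<Longrightarrow> \<not> ble y z \<Longrightarrow> ble z m"
          using IH unfolding LPS'_def by blast
        have "W m \<in> L'" using Wmem m(1) .
        moreover have "\<forall>z'\<in>L'. ble x' z' \<and> \<not> ble y' z' \<longrightarrow> ble z' (W m)"
        proof (intro ballI impI)
          fix z' assume z': "z' \<in> L'" "ble x' z' \<and> \<not> ble y' z'"
          obtain b z where zz: "z' = b#z" using doubling_Cons z'(1) unfolding L'_def by blast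
          have zL: "z \<in> L" using memL z'(1) zz by blast
          have xz: "ble x z" using z'(2) zz x' by auto
          have nyz: "\<not> ble y z"
          proof
            assume yz: "ble y z"
            then have "\<not> b" using z'(2) zz y' byT by (cases b) auto
            then have "z \<in> D" using z'(1) zz memb by simp
            then have "y \<in> D" using Ddown yL yz by blast
            then show False using ynD by blast
          qed
          have "ble z m" using m(4) zL xz nyz by blast
          then show "ble z' (W m)" using Wge z'(1) zz m(1) by blast
        qed
        moreover have "ble x' (W m)" "\<not> ble y' (W m)" unfolding W_def using m x' y' byT \<open>\<not>bx\<close> by auto
        ultimately show ?thesis unfolding L'_def by blast
      qed
    qed
  next
    case True
    note bxT = True
    then have byT: "yb" using xy(2) by simp
    have xC: "x \<in> (L - D) \<union> C" using cov(1) x' memb bxT by simp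
    have yC: "y \<in> (L - D) \<union> C" using cov(2) y' memb byT by simp
    have "coverS L x y" unfolding coverS_def
    proof (intro conjI ballI impI)
      show "x \<in> L" "y \<in> L" "ble x y" by (fact xL yL xy(1))+
      show "x \<noteq> y" using cov(4) x' y' bxT byT by simp
      fix z assume z: "z \<in> L" "ble x z \<and> ble z y"
      have "z \<in> (L - D) \<union> C"
      proof (rule ccontr)
        assume nz: "z \<notin> (L - D) \<union> C"
        then have zD: "z \<in> D" using z by blast
        then have "x \<in> D" using Ddown z xL by blast
        then have "x \<in> C" using xC by blast
        moreover obtain c where "c \<in> C" "ble z c" using DC zD by blast
        ultimately have "z \<in> C" using conv z by blast
        then show False using nz by blast
      qed
      then have "True#z \<in> L'" using memb by simp
      then have "True#z = x' \<or> True#z = y'" using cov(5)[of "True#z"] z x' y' bxT byT by simp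
      then show "z = x \<or> z = y" using x' y' by auto
    qed
    then obtain m where m: "m \<in> L" "ble x m" "\<not> ble y m" "\<And>z. z \<in> L \<Longrightarrow> ble x z \<Longrightarrow> \<not> ble y z \<Longrightarrow> ble z m"
      using IH unfolding LPS'_def by blast
    have mC: "m \<in> (L - D) \<union> C"
    proof (rule ccontr)
      assume nm: "m \<notin> (L - D) \<union> C"
      then have mD: "m \<in> D" using m(1) by blast
      then have "x \<in> D" using Ddown xL m(2) by blast
      then have "x \<in> C" using xC by blast
      moreover obtain c where "c \<in> C" "ble m c" using DC mD by blast
      ultimately have "m \<in> C" using conv m(1,2) by blast
      then show False using nm by blast
    qed
    have "True#m \<in> L'" using memb mC by simp
    moreover have "\<forall>z'\<in>L'. ble x' z' \<and> \<not> ble y' z' \<longrightarrow> ble z' (True#m)"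
    proof (intro ballI impI)
      fix z' assume z': "z' \<in> L'" "ble x' z' \<and> \<not> ble y' z'"
      obtain b z where zz: "z' = b#z" using doubling_Cons z'(1) unfolding L'_def by blast
      have zL: "z \<in> L" using memL z'(1) zz by blast
      have b: "b" using z'(2) zz x' bxT by (cases b) auto
      have "ble x z" "\<not> ble y z" using z'(2) zz y' x' bxT byT b by auto
      then have "ble z m" using m(4) zL by blast
      then show "ble z' (True#m)" using zz by simp
    qed
    moreover have "ble x' (True#m)" "\<not> ble y' (True#m)" using m x' y' byT bxT by auto
    ultimately show ?thesis unfolding L'_def by blast
  qed
qed


lemma LPS_gen: "doubling_gen lower_pseudo_interval S \<Longrightarrow> LPS S"
proof (induct rule: doubling_gen.induct)
  case base
  then show ?case unfolding LPS_def coverS_def by auto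
next
  case (step L C)
  from step(4) obtain a B where cv: "convex_in L C" and a: "a \<in> L" "B \<noteq> {}" "B \<subseteq> L"
    "\<forall>b\<in>B. ble a b" "C = (\<Union>b\<in>B. interval_in L a b)"
    unfolding lower_pseudo_interval_def by blast
  have CL: "C \<subseteq> L" using cv unfolding convex_in_def by blast
  have conv: "\<And>x y z. x \<in> C \<Longrightarrow> z \<in> C \<Longrightarrow> y \<in> L \<Longrightarrow> ble x y \<Longrightarrow> ble y z \<Longrightarrow> y \<in> C"
    using cv unfolding convex_in_def by blast
  obtain b where "b \<in> B" using a(2) by blast
  then have aC: "a \<in> C" using a ble_refl unfolding interval_in_def by blast
  have amin: "\<And>c. c \<in> C \<Longrightarrow> ble a c" using a(5) unfolding interval_in_def by blast
  show ?case using LPS_doubling[OF step(2) CL conv aC amin] .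
qed

lemma LPS'_gen: "doubling_gen upper_pseudo_interval S \<Longrightarrow> LPS' S"
proof (induct rule: doubling_gen.induct)
  case base
  then show ?case unfolding LPS'_def coverS_def by auto
next
  case (step L C)
  from step(4) obtain b A where cv: "convex_in L C" and a: "b \<in> L" "A \<noteq> {}" "A \<subseteq> L"
    "\<forall>a\<in>A. ble a b" "C = (\<Union>a\<in>A. interval_in L a b)"
    unfolding upper_pseudo_interval_def by blast
  have CL: "C \<subseteq> L" using cv unfolding convex_in_def by blast
  have conv: "\<And>x y z. x \<in> C \<Longrightarrow> z \<in> C \<Longrightarrow> y \<in> L \<Longrightarrow> ble x y \<Longrightarrow> ble y z \<Longrightarrow> y \<in> C"
    using cv unfolding convex_in_def by blast
  obtain a0 where "a0 \<in> A" using a(2) by blast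
  then have bC: "b \<in> C" using a ble_refl unfolding interval_in_def by blast
  have bmax: "\<And>c. c \<in> C \<Longrightarrow> ble c b" using a(5) unfolding interval_in_def by blast
  show ?case using LPS'_doubling[OF step(2) CL conv bC bmax] .
qed

lemma LP_transfer:
  assumes iso: "order_iso_to TYPE('a::order) S" and LP: "LPS S"
  shows "\<forall>x y::'a. (x \<le> y \<and> x \<noteq> y \<and> (\<forall>z. x \<le> z \<and> z \<le> y \<longrightarrow> z = x \<or> z = y)) \<longrightarrow>
           (\<exists>l. l \<le> y \<and> \<not> l \<le> x \<and> (\<forall>z. z \<le> y \<and> \<not> z \<le> x \<longrightarrow> l \<le> z))"
proof (intro allI impI)
  obtain f :: "'a \<Rightarrow> bool list" where f: "bij_betw f UNIV S" "\<And>x y. x \<le> y \<longleftrightarrow> ble (f x) (f y)"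
    using iso unfolding order_iso_to_def by blast
  have inj: "inj f" and img: "f ` UNIV = S" using f(1) unfolding bij_betw_def by auto
  fix x y :: 'a
  assume c: "x \<le> y \<and> x \<noteq> y \<and> (\<forall>z. x \<le> z \<and> z \<le> y \<longrightarrow> z = x \<or> z = y)"
  have "coverS S (f x) (f y)" unfolding coverS_def
  proof (intro conjI ballI impI)
    show "f x \<in> S" "f y \<in> S" using img by auto
    show "ble (f x) (f y)" using c f(2) by blast
    show "f x \<noteq> f y" using c inj by (meson injD)
    fix z assume z: "z \<in> S" "ble (f x) z \<and> ble z (f y)"
    then obtain z0 where "z = f z0" using img by blast
    then show "z = f x \<or> z = f y" using z c f(2) by blast
  qed
  then obtain l where l: "l \<in> S" "ble l (f y)" "\<not> ble l (f x)" "\<forall>z\<in>S. ble z (f y) \<and> \<not> ble z (f x) \<longrightarrow> ble l z"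
    using LP unfolding LPS_def by blast
  obtain l0 where l0: "l = f l0" using img l(1) by blast
  show "\<exists>l. l \<le> y \<and> \<not> l \<le> x \<and> (\<forall>z. z \<le> y \<and> \<not> z \<le> x \<longrightarrow> l \<le> z)"
  proof (intro exI conjI allI impI)
    show "l0 \<le> y" "\<not> l0 \<le> x" using l l0 f(2) by auto
    fix z assume "z \<le> y \<and> \<not> z \<le> x"
    then show "l0 \<le> z" using l(4) l0 f(2) img by auto
  qed
qed

lemma LP'_transfer:
  assumes iso: "order_iso_to TYPE('a::order) S" and LP: "LPS' S"
  shows "\<forall>x y::'a. (x \<le> y \<and> x \<noteq> y \<and> (\<forall>z. x \<le> z \<and> z \<le> y \<longrightarrow> z = x \<or> z = y)) \<longrightarrow>
           (\<exists>m. x \<le> m \<and> \<not> y \<le> m \<and> (\<forall>z. x \<le> z \<and> \<not> y \<le> z \<longrightarrow> z \<le> m))"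
proof (intro allI impI)
  obtain f :: "'a \<Rightarrow> bool list" where f: "bij_betw f UNIV S" "\<And>x y. x \<le> y \<longleftrightarrow> ble (f x) (f y)"
    using iso unfolding order_iso_to_def by blast
  have inj: "inj f" and img: "f ` UNIV = S" using f(1) unfolding bij_betw_def by auto
  fix x y :: 'a
  assume c: "x \<le> y \<and> x \<noteq> y \<and> (\<forall>z. x \<le> z \<and> z \<le> y \<longrightarrow> z = x \<or> z = y)"
  have "coverS S (f x) (f y)" unfolding coverS_def
  proof (intro conjI ballI impI)
    show "f x \<in> S" "f y \<in> S" using img by auto
    show "ble (f x) (f y)" using c f(2) by blast
    show "f x \<noteq> f y" using c inj by (meson injD)
    fix z assume z: "z \<in> S" "ble (f x) z \<and> ble z (f y)"
    then obtain z0 where "z = f z0" using img by blast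
    then show "z = f x \<or> z = f y" using z c f(2) by blast
  qed
  then obtain m where m: "m \<in> S" "ble (f x) m" "\<not> ble (f y) m" "\<forall>z\<in>S. ble (f x) z \<and> \<not> ble (f y) z \<longrightarrow> ble z m"
    using LP unfolding LPS'_def by blast
  obtain m0 where m0: "m = f m0" using img m(1) by blast
  show "\<exists>m. x \<le> m \<and> \<not> y \<le> m \<and> (\<forall>z. x \<le> z \<and> \<not> y \<le> z \<longrightarrow> z \<le> m)"
  proof (intro exI conjI allI impI)
    show "x \<le> m0" "\<not> y \<le> m0" using m m0 f(2) by auto
    fix z assume "x \<le> z \<and> \<not> y \<le> z"
    then show "z \<le> m0" using m(4) m0 f(2) img by auto
  qed
qed

lemma shell_cond:
  assumes "shellable TYPE('a::{finite,order})"
  shows "\<exists>Fs. distinct Fs \<and> set Fs = {F::'a set. max_chain F} \<and>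
     (\<forall>k. 0 < k \<longrightarrow> k < length Fs \<longrightarrow> (\<exists>i<k. \<exists>v\<in>Fs!k. Fs!k - {v} \<subseteq> Fs!i))"
proof -
  obtain Fs :: "'a set list" where Fs: "distinct Fs" "set Fs = {F. max_chain F}"
    "\<forall>j. j + 1 < length Fs \<longrightarrow>
        pure_of_dim ((\<Union>i\<le>j. Pow (Fs ! i)) \<inter> Pow (Fs ! (j + 1))) (int (card (Fs ! (j + 1))) - 2)"
    using assms unfolding shellable_def by blast
  have "\<exists>i<k. \<exists>v\<in>Fs!k. Fs!k - {v} \<subseteq> Fs!i" if k: "0 < k" "k < length Fs" for k
  proof -
    define j where "j = k - 1"
    have jk: "j + 1 = k" using k(1) unfolding j_def by simp
    define K where "K = (\<Union>i\<le>j. Pow (Fs ! i)) \<inter> Pow (Fs ! k)"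
    have pure: "pure_of_dim K (int (card (Fs ! k)) - 2)" using Fs(3) k(2) jk unfolding K_def by metis
    have "finite K" by (rule finite_subset[OF subset_UNIV]) simp
    moreover have "{} \<in> K" unfolding K_def by auto
    ultimately obtain T where T: "T \<in> K" "\<forall>G\<in>K. T \<subseteq> G \<longrightarrow> G = T"
      using finite_has_maximal[of K] by blast
    have cT: "int (card T) - 1 = int (card (Fs ! k)) - 2" using pure T unfolding pure_of_dim_def by blast
    obtain i where i: "i \<le> j" "T \<subseteq> Fs!i" and Tk: "T \<subseteq> Fs!k" using T(1) unfolding K_def by blast
    have fk: "finite (Fs!k)" by simp
    have ck: "card T + 1 = card (Fs!k)" using cT by linarith
    then have "T \<noteq> Fs!k" by auto
    then obtain v where v: "v \<in> Fs!k" "v \<notin> T" using Tk by blast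
    have sub: "T \<subseteq> Fs!k - {v}" using Tk v by blast
    have "card (Fs!k - {v}) = card T" using ck v fk by (simp add: card_Diff_singleton)
    then have "T = Fs!k - {v}" using sub fk by (metis card_subset_eq finite_Diff)
    then show ?thesis using i v jk by (intro exI[of _ i]) auto
  qed
  then show ?thesis using Fs by blast
qed

lemma chain_iff: "Complete_Partial_Order.chain (\<le>) S \<longleftrightarrow> (\<forall>x\<in>S. \<forall>y\<in>S. (x::'a::order) \<le> y \<or> y \<le> x)"
  unfolding chain_def by blast

theorem corollary3p25:
  shows "(join_cong_uniform TYPE('a::{finite,lattice}) \<and> shellable TYPE('a)
           \<longrightarrow> join_extremal TYPE('a)) \<and>
         (meet_cong_uniform TYPE('a) \<and> shellable TYPE('a)
           \<longrightarrow> meet_extremal TYPE('a))"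
proof (intro conjI impI)
  have lenq: "lattice_length TYPE('a) = Max {card S - 1 |S::'a set. \<forall>x\<in>S. \<forall>y\<in>S. x \<le> y \<or> y \<le> x}"
    unfolding lattice_length_def chain_iff by simp
  have mc: "max_chain F \<longleftrightarrow> (\<forall>x\<in>F. \<forall>y\<in>F. x \<le> y \<or> y \<le> x) \<and>
     (\<forall>G. (\<forall>x\<in>G. \<forall>y\<in>G. x \<le> y \<or> y \<le> x) \<and> F \<subseteq> G \<longrightarrow> G = F)" for F :: "'a set"
    unfolding max_chain_def chain_iff by simp
  {
    assume a: "join_cong_uniform TYPE('a) \<and> shellable TYPE('a)"
    interpret lo: fin_lat "(\<le>) :: 'a \<Rightarrow> 'a \<Rightarrow> bool" sup inf
      by unfold_locales auto
    obtain S where S: "doubling_gen lower_pseudo_interval S" "order_iso_to TYPE('a) S"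
      using a unfolding join_cong_uniform_def by blast
    have LP: lo.LPa using LP_transfer[OF S(2) LPS_gen[OF S(1)]]
      unfolding lo.LPa_def lo.cover_def lo.islab_def by blast
    obtain Fs where Fs: "distinct Fs" "set Fs = {F::'a set. max_chain F}"
      "\<forall>k. 0 < k \<longrightarrow> k < length Fs \<longrightarrow> (\<exists>i<k. \<exists>v\<in>Fs!k. Fs!k - {v} \<subseteq> Fs!i)"
      using shell_cond a by blast
    have "{F::'a set. max_chain F} = {F. lo.maxch F}"
      unfolding mc lo.maxch_def lo.chainL_def by simp
    then have "lo.shelling_cond Fs" unfolding lo.shelling_cond_def using Fs by simp
    then have eq: "Max {card S - 1 |S. lo.chainL S} = card {x. lo.jirr x}" using lo.main_loc LP by blast
    show "join_extremal TYPE('a)"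
      unfolding join_extremal_def lenq using eq
      unfolding lo.chainL_def lo.jirr_def join_irreducible_def by simp
  }
  {
    assume a: "meet_cong_uniform TYPE('a) \<and> shellable TYPE('a)"
    interpret hi: fin_lat "\<lambda>x y::'a. y \<le> x" inf sup
      by unfold_locales auto
    obtain S where S: "doubling_gen upper_pseudo_interval S" "order_iso_to TYPE('a) S"
      using a unfolding meet_cong_uniform_def by blast
    have LP: hi.LPa
      unfolding hi.LPa_def hi.cover_def hi.islab_def
    proof (intro allI impI)
      fix x y :: 'a
      assume "y \<le> x \<and> x \<noteq> y \<and> (\<forall>z. z \<le> x \<and> y \<le> z \<longrightarrow> z = x \<or> z = y)"
      then have "y \<le> x \<and> y \<noteq> x \<and> (\<forall>z. y \<le> z \<and> z \<le> x \<longrightarrow> z = y \<or> z = x)" by blast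
      then have "\<exists>m. y \<le> m \<and> \<not> x \<le> m \<and> (\<forall>z. y \<le> z \<and> \<not> x \<le> z \<longrightarrow> z \<le> m)"
        using LP'_transfer[OF S(2) LPS'_gen[OF S(1)]] by blast
      then show "\<exists>l. y \<le> l \<and> \<not> x \<le> l \<and> (\<forall>z. y \<le> z \<and> \<not> x \<le> z \<longrightarrow> z \<le> l)" by blast
    qed
    obtain Fs where Fs: "distinct Fs" "set Fs = {F::'a set. max_chain F}"
      "\<forall>k. 0 < k \<longrightarrow> k < length Fs \<longrightarrow> (\<exists>i<k. \<exists>v\<in>Fs!k. Fs!k - {v} \<subseteq> Fs!i)"
      using shell_cond a by blast
    have ch: "hi.chainL S \<longleftrightarrow> (\<forall>x\<in>S. \<forall>y\<in>S. x \<le> y \<or> y \<le> x)" for S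
      unfolding hi.chainL_def by blast
    have "{F::'a set. max_chain F} = {F. hi.maxch F}"
      unfolding mc hi.maxch_def ch by simp
    then have "hi.shelling_cond Fs" unfolding hi.shelling_cond_def using Fs by simp
    then have eq: "Max {card S - 1 |S. hi.chainL S} = card {x. hi.jirr x}" using hi.main_loc LP by blast
    show "meet_extremal TYPE('a)"
      unfolding meet_extremal_def lenq using eq
      unfolding ch hi.jirr_def meet_irreducible_def by simp
  }
qed

end
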